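(* Let $\delta\ge0$, $\rho\in(0,1]$ and $\Pi\in\mathscr P_\delta(\Pi^* )$. Put $S_{\Pi,\rho}=(I+\rho^{-2}\Pi)^{1/2}$, $P^*_\rho=(I+\rho^{-2}\Pi^* )^{-1/2}$, $U=P^*_\rho S_{\Pi,\rho}^2P^*_\rho$, $U^*=I$ and $\alpha=2\delta^2\rho^{-2}+2\delta\rho^{-1}$. Then $\|U-U^*\|_2\le\alpha$.
   Context: $\Pi^*$ is the orthogonal projector onto an $m^*$-dimensional subspace of $\mathbb R^d$; $I$ is the $d\times d$ identity; $\|A\|_2$ is the Frobenius norm; $A\preceq B$ means $B-A$ is positive semidefinite; matrix square roots are positive semidefinite square roots. $\mathscr P_\delta(\Pi^* )=\{\Pi\in\mathbb R^{d\times d}\text{ symmetric}:\operatorname{tr}\Pi\le m^*,\ 0\preceq\Pi\preceq I,\ \operatorname{tr}((I-\Pi)\Pi^* )\le\delta^2\}$. Note $P^*_\rho=(I-\Pi^* )+\rho(1+\rho^2)^{-1/2}\Pi^*$. *)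

theory Defs
  imports "HOL-Analysis.Analysis"
begin

text \<open>Real d x d matrices are modelled as real^'n^'n, with 'n a finite index type (d = CARD('n)).\<close>

definition symmetric_mat :: "real^'n^'n \<Rightarrow> bool" where
  "symmetric_mat A \<longleftrightarrow> transpose A = A"

definition psd :: "real^'n^'n \<Rightarrow> bool" where
  "psd A \<longleftrightarrow> symmetric_mat A \<and> (\<forall>x. 0 \<le> x \<bullet> (A *v x))"

definition loewner_le :: "real^'n^'n \<Rightarrow> real^'n^'n \<Rightarrow> bool" where
  "loewner_le A B \<longleftrightarrow> psd (B - A)"

definition psd_sqrt :: "real^'n^'n \<Rightarrow> real^'n^'n" where
  "psd_sqrt A = (THE B. psd B \<and> B ** B = A)"

definition frob_norm :: "real^'n^'n \<Rightarrow> real" where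
  "frob_norm A = sqrt (\<Sum>i\<in>UNIV. \<Sum>j\<in>UNIV. (A $ i $ j)\<^sup>2)"

definition orth_projector :: "real^'n^'n \<Rightarrow> nat \<Rightarrow> bool" where
  "orth_projector P m \<longleftrightarrow> symmetric_mat P \<and> P ** P = P \<and> rank P = m"

definition Pset :: "real \<Rightarrow> nat \<Rightarrow> real^'n^'n \<Rightarrow> (real^'n^'n) set" where
  "Pset \<delta> m Pstar = {P. symmetric_mat P \<and> trace P \<le> real m \<and> loewner_le 0 P
      \<and> loewner_le P (mat 1) \<and> trace ((mat 1 - P) ** Pstar) \<le> \<delta>\<^sup>2}"

end

theory Submission
  imports Defs
begin


lemma sym_inner:
  fixes A :: "real^'n^'n"
  assumes "symmetric_mat A"
  shows "x \<bullet> (A *v y) = (A *v x) \<bullet> y"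
proof -
  have "x \<bullet> (A *v y) = (x v* A) \<bullet> y" by (simp add: dot_lmul_matrix)
  also have "x v* A = transpose A *v x" by simp
  finally show ?thesis using assms by (metis symmetric_mat_def)
qed

lemma quad_zero:
  fixes a b :: real
  assumes "\<And>t. a * t + b * t\<^sup>2 \<le> 0"
  shows "a = 0"
proof (rule ccontr)
  assume na: "a \<noteq> 0"
  define e where "e = \<bar>a\<bar> / (\<bar>b\<bar> + 1)"
  have e: "e > 0" using na by (simp add: e_def)
  define t where "t = (if a > 0 then e else - e)"
  have "a * t = \<bar>a\<bar> * e" using na by (auto simp: t_def)
  moreover have "b * t\<^sup>2 \<ge> - \<bar>b\<bar> * e * e"
    by (auto simp: t_def power2_eq_square abs_if mult_le_0_iff e mult_mono' less_le) 
  moreover have "\<bar>a\<bar> * e - \<bar>b\<bar> * e * e > 0"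
  proof -
    have "\<bar>b\<bar> * e < \<bar>a\<bar>" using na unfolding e_def
      by (simp add: field_simps)
    then show ?thesis using e by (smt (verit) mult_strict_right_mono mult.commute)
  qed
  ultimately have "a * t + b * t\<^sup>2 > 0" by linarith
  with assms[of t] show False by linarith
qed



lemma qf_expand:
  fixes A :: "real^'n^'n"
  assumes "symmetric_mat A"
  shows "(v + t *\<^sub>R w) \<bullet> (A *v (v + t *\<^sub>R w)) =
     v \<bullet> (A *v v) + 2 * t * (w \<bullet> (A *v v)) + t\<^sup>2 * (w \<bullet> (A *v w))"
proof -
  have "v \<bullet> (A *v w) = w \<bullet> (A *v v)"
    using sym_inner[OF assms, of v w] by (simp add: inner_commute)
  then show ?thesis
    by (simp add: algebra_simps inner_add_left inner_add_right power2_eq_square)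
qed

lemma eigvec_subspace:
  fixes A :: "real^'n^'n"
  assumes sA: "symmetric_mat A" and W: "subspace W" and inv: "\<And>w. w \<in> W \<Longrightarrow> A *v w \<in> W"
    and ne: "x0 \<in> W" "x0 \<noteq> 0"
  shows "\<exists>v\<in>W. norm v = 1 \<and> A *v v = (v \<bullet> (A *v v)) *\<^sub>R v"
proof -
  define K where "K = W \<inter> sphere 0 1"
  have cK: "compact K" unfolding K_def
    by (simp add: W closed_subspace compact_Int_closed compact_sphere inf_commute closed_Int_compact)
  have neK: "K \<noteq> {}"
  proof -
    have "(1 / norm x0) *\<^sub>R x0 \<in> K" using ne W unfolding K_def
      by (simp add: subspace_scale)
    then show ?thesis by blast
  qed
  have cf: "continuous_on K (\<lambda>x. x \<bullet> (A *v x))"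
    by (intro continuous_intros linear_continuous_on linear_linear[THEN iffD1] matrix_vector_mul_linear)
  obtain v where vK: "v \<in> K" and vmax: "\<And>y. y \<in> K \<Longrightarrow> y \<bullet> (A *v y) \<le> v \<bullet> (A *v v)"
    using continuous_attains_sup[OF cK neK cf] by blast
  define l where "l = v \<bullet> (A *v v)"
  have vW: "v \<in> W" and nv: "norm v = 1" using vK by (auto simp: K_def)
  have bound: "x \<bullet> (A *v x) \<le> l * (norm x)\<^sup>2" if "x \<in> W" for x
  proof (cases "x = 0")
    case True then show ?thesis by simp
  next
    case False
    define y where "y = (1 / norm x) *\<^sub>R x"
    have "y \<in> K" using False that W unfolding K_def y_def by (simp add: subspace_scale)
    then have "y \<bullet> (A *v y) \<le> l" using vmax l_def by blast
    moreover have "y \<bullet> (A *v y) = (x \<bullet> (A *v x)) / (norm x)\<^sup>2"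
      unfolding y_def by (simp add: matrix_vector_mult_scaleR power2_eq_square)
    ultimately show ?thesis using False by (simp add: field_simps)
  qed
  define g where "g = A *v v - l *\<^sub>R v"
  have gW: "g \<in> W" unfolding g_def using vW inv W by (simp add: subspace_diff subspace_scale)
  have "2 * (g \<bullet> g) = 0"
  proof (rule quad_zero)
    fix t :: real
    have "v + t *\<^sub>R g \<in> W" using vW gW W by (simp add: subspace_add subspace_scale)
    from bound[OF this] have "(v + t *\<^sub>R g) \<bullet> (A *v (v + t *\<^sub>R g)) \<le> l * (norm (v + t *\<^sub>R g))\<^sup>2" .
    moreover have "(norm (v + t *\<^sub>R g))\<^sup>2 = 1 + 2 * t * (v \<bullet> g) + t\<^sup>2 * (g \<bullet> g)"
    proof -
      have "(norm (v + t *\<^sub>R g))\<^sup>2 = (v + t *\<^sub>R g) \<bullet> (v + t *\<^sub>R g)" by (simp add: dot_square_norm)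
      also have "\<dots> = v \<bullet> v + 2 * t * (v \<bullet> g) + t\<^sup>2 * (g \<bullet> g)"
        by (simp add: inner_add_left inner_add_right inner_commute algebra_simps power2_eq_square)
      also have "v \<bullet> v = 1" using nv by (simp add: dot_square_norm)
      finally show ?thesis .
    qed
    ultimately have "l + 2 * t * (g \<bullet> (A *v v)) + t\<^sup>2 * (g \<bullet> (A *v g)) \<le> l * (1 + 2 * t * (v \<bullet> g) + t\<^sup>2 * (g \<bullet> g))"
      using qf_expand[OF sA, of v t g] l_def by simp
    moreover have "g \<bullet> (A *v v) = g \<bullet> g + l * (v \<bullet> g)"
      unfolding g_def by (simp add: inner_diff_left inner_diff_right inner_commute algebra_simps)
    ultimately show "2 * (g \<bullet> g) * t + (g \<bullet> (A *v g) - l * (g \<bullet> g)) * t\<^sup>2 \<le> 0"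
      by (simp add: algebra_simps)
  qed
  then have "g = 0" by simp
  then show ?thesis using vW nv unfolding g_def l_def by auto
qed



lemma orth_inner_sum:
  fixes B :: "('a::real_inner) set"
  assumes fin: "finite B" and po: "pairwise orthogonal B" and n1: "\<And>b. b \<in> B \<Longrightarrow> norm b = 1"
    and b: "b \<in> B"
  shows "b \<bullet> (\<Sum>c\<in>B. f c *\<^sub>R c) = f b"
proof -
  have "b \<bullet> (\<Sum>c\<in>B. f c *\<^sub>R c) = (\<Sum>c\<in>B. f c * (b \<bullet> c))" by (simp add: inner_sum_right)
  also have "\<dots> = f b * (b \<bullet> b) + (\<Sum>c\<in>B - {b}. f c * (b \<bullet> c))"
    using fin b by (simp add: sum.remove)
  also have "(\<Sum>c\<in>B - {b}. f c * (b \<bullet> c)) = 0"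
    by (rule sum.neutral) (use po b in \<open>auto simp: pairwise_def orthogonal_def\<close>)
  also have "b \<bullet> b = 1" using n1[OF b] by (simp add: dot_square_norm)
  finally show ?thesis by simp
qed

lemma orth_expand:
  fixes B :: "('a::euclidean_space) set"
  assumes fin: "finite B" and po: "pairwise orthogonal B" and n1: "\<And>b. b \<in> B \<Longrightarrow> norm b = 1"
    and x: "x \<in> span B"
  shows "x = (\<Sum>b\<in>B. (b \<bullet> x) *\<^sub>R b)"
proof -
  obtain u where xu: "x = (\<Sum>v\<in>B. u v *\<^sub>R v)" using x span_finite[OF fin] by auto
  have "b \<bullet> x = u b" if "b \<in> B" for b
    unfolding xu using orth_inner_sum[OF fin po n1 that] by simp
  then show ?thesis using xu by simp
qed

lemma spectral:
  fixes A :: "real^'n^'n"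
  assumes sA: "symmetric_mat A"
  obtains B where "finite B" "pairwise orthogonal B"
    "\<And>b. b \<in> B \<Longrightarrow> norm b = 1" "\<And>b. b \<in> B \<Longrightarrow> A *v b = (b \<bullet> (A *v b)) *\<^sub>R b"
    "span B = UNIV"
proof -
  have "\<forall>k. k \<le> CARD('n) \<longrightarrow> (\<exists>B. finite B \<and> card B = k \<and> pairwise orthogonal B \<and>
     (\<forall>b\<in>B. norm b = 1 \<and> A *v b = (b \<bullet> (A *v b)) *\<^sub>R b))"
  proof (intro allI)
    fix k show "k \<le> CARD('n) \<longrightarrow> (\<exists>B. finite B \<and> card B = k \<and> pairwise orthogonal B \<and>
     (\<forall>b\<in>B. norm b = 1 \<and> A *v b = (b \<bullet> (A *v b)) *\<^sub>R b))"
    proof (induction k)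
      case 0
      show ?case by (intro impI exI[of _ "{}"]) auto
    next
      case (Suc k)
      show ?case
      proof
        assume k1: "Suc k \<le> CARD('n)"
        then obtain B where fB: "finite B" and cB: "card B = k" and po: "pairwise orthogonal B"
          and eB: "\<forall>b\<in>B. norm b = 1 \<and> A *v b = (b \<bullet> (A *v b)) *\<^sub>R b"
          using Suc.IH by auto
        have "0 \<notin> B" using eB by force
        then have iB: "independent B" using pairwise_orthogonal_independent po by blast
        have "dim B = k" using dim_span_eq_card_independent[OF iB] cB by (simp add: dim_span)
        then have "dim B < DIM(real^'n)" using k1 by simp
        then obtain x0 where x0: "x0 \<noteq> 0" "\<And>y. y \<in> span B \<Longrightarrow> orthogonal x0 y"
          using orthogonal_to_subspace_exists by blast
        define W where "W = {y. \<forall>x\<in>B. orthogonal x y}"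
        have sW: "subspace W" unfolding W_def by (rule subspace_orthogonal_to_vectors)
        have x0W: "x0 \<in> W" unfolding W_def using x0(2) span_base orthogonal_commute by blast
        have invW: "A *v w \<in> W" if "w \<in> W" for w
        proof -
          have "orthogonal b (A *v w)" if "b \<in> B" for b
          proof -
            have "b \<bullet> (A *v w) = (A *v b) \<bullet> w" by (rule sym_inner[OF sA])
            also have "\<dots> = (b \<bullet> (A *v b)) * (b \<bullet> w)" using eB \<open>b \<in> B\<close> by (metis inner_scaleR_left)
            also have "b \<bullet> w = 0" using \<open>w \<in> W\<close> \<open>b \<in> B\<close> by (auto simp: W_def orthogonal_def)
            finally show ?thesis by (simp add: orthogonal_def)
          qed
          then show ?thesis by (simp add: W_def)
        qed
        obtain v where vW: "v \<in> W" and nv: "norm v = 1" and ev: "A *v v = (v \<bullet> (A *v v)) *\<^sub>R v"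
          using eigvec_subspace[OF sA sW invW x0W x0(1)] by blast
        have vB: "v \<notin> B"
        proof
          assume "v \<in> B"
          then have "v \<bullet> v = 0" using vW by (auto simp: W_def orthogonal_def)
          then show False using nv by simp
        qed
        show "\<exists>B. finite B \<and> card B = Suc k \<and> pairwise orthogonal B \<and>
          (\<forall>b\<in>B. norm b = 1 \<and> A *v b = (b \<bullet> (A *v b)) *\<^sub>R b)"
        proof (intro exI[of _ "insert v B"] conjI)
          show "finite (insert v B)" using fB by simp
          show "card (insert v B) = Suc k" using fB vB cB by simp
          show "pairwise orthogonal (insert v B)"
            using po vW unfolding pairwise_insert W_def by (auto simp: orthogonal_commute)
          show "\<forall>b\<in>insert v B. norm b = 1 \<and> A *v b = (b \<bullet> (A *v b)) *\<^sub>R b"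
            using eB nv ev by auto
        qed
      qed
    qed
  qed
  then obtain B where fB: "finite B" and cB: "card B = CARD('n)" and po: "pairwise orthogonal B"
    and eB: "\<forall>b\<in>B. norm b = 1 \<and> A *v b = (b \<bullet> (A *v b)) *\<^sub>R b" by blast
  have "0 \<notin> B" using eB by force
  then have iB: "independent B" using pairwise_orthogonal_independent po by blast
  have "UNIV \<subseteq> span B"
    by (rule card_ge_dim_independent) (use iB cB in auto)
  then have "span B = UNIV" by auto
  then show ?thesis using that fB po eB by blast
qed



definition outer_sum :: "(real^'n \<Rightarrow> real) \<Rightarrow> (real^'n) set \<Rightarrow> real^'n^'n" where
  "outer_sum f B = (\<chi> i j. \<Sum>b\<in>B. f b * b$i * b$j)"

lemma outer_sum_mv:
  "outer_sum f B *v x = (\<Sum>b\<in>B. (f b * (b \<bullet> x)) *\<^sub>R b)"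
  by (simp add: outer_sum_def vec_eq_iff matrix_vector_mult_def inner_vec_def sum_component
      sum_distrib_left sum_distrib_right mult_ac sum.swap[where A=B])

lemma outer_sum_sym: "symmetric_mat (outer_sum f B)"
  by (simp add: symmetric_mat_def outer_sum_def transpose_def vec_eq_iff mult_ac)

lemma mv_sum:
  fixes A :: "real^'n^'n"
  shows "A *v (\<Sum>b\<in>B. g b) = (\<Sum>b\<in>B. A *v g b)"
  by (rule linear_sum[OF matrix_vector_mul_linear])

lemma psd_sqrt_exists:
  fixes A :: "real^'n^'n"
  assumes pA: "psd A"
  shows "\<exists>S. psd S \<and> S ** S = A"
proof -
  have sA: "symmetric_mat A" using pA by (simp add: psd_def)
  obtain B where fB: "finite B" and po: "pairwise orthogonal B" and n1: "\<And>b. b \<in> B \<Longrightarrow> norm b = 1"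
    and ev: "\<And>b. b \<in> B \<Longrightarrow> A *v b = (b \<bullet> (A *v b)) *\<^sub>R b" and sp: "span B = UNIV"
    using spectral[OF sA] by blast
  define l where "l b = b \<bullet> (A *v b)" for b
  have l0: "l b \<ge> 0" for b using pA by (simp add: psd_def l_def)
  define mu where "mu b = sqrt (l b)" for b
  define S where "S = outer_sum mu B"
  have Sx: "S *v x = (\<Sum>b\<in>B. (mu b * (b \<bullet> x)) *\<^sub>R b)" for x
    unfolding S_def by (rule outer_sum_mv)
  have "psd S"
    unfolding psd_def
  proof (intro conjI allI)
    show "symmetric_mat S" unfolding S_def by (rule outer_sum_sym)
    fix x
    have "x \<bullet> (S *v x) = (\<Sum>b\<in>B. mu b * (b \<bullet> x) * (x \<bullet> b))"
      by (simp add: Sx inner_sum_right)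
    also have "\<dots> \<ge> 0"
      by (intro sum_nonneg) (use l0 in \<open>simp add: mu_def inner_commute mult.assoc mult_nonneg_nonneg\<close>)
    finally show "0 \<le> x \<bullet> (S *v x)" .
  qed
  moreover have "S ** S = A"
  proof (rule iffD2[OF matrix_eq], intro allI)
    fix x
    have "(S ** S) *v x = S *v (S *v x)" by (simp add: matrix_vector_mul_assoc)
    also have "\<dots> = (\<Sum>b\<in>B. (mu b * mu b * (b \<bullet> x)) *\<^sub>R b)"
    proof -
      have "b \<bullet> (S *v x) = mu b * (b \<bullet> x)" if "b \<in> B" for b
        unfolding Sx by (rule orth_inner_sum[OF fB po n1 that])
      then show ?thesis by (subst (1) Sx) (intro sum.cong; simp)
    qed
    also have "\<dots> = (\<Sum>b\<in>B. (b \<bullet> x) *\<^sub>R (A *v b))"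
    proof (intro sum.cong refl)
      fix b assume "b \<in> B"
      have "mu b * mu b = l b" using l0 by (simp add: mu_def)
      moreover have "A *v b = l b *\<^sub>R b" unfolding l_def by (rule ev[OF \<open>b \<in> B\<close>])
      ultimately show "(mu b * mu b * (b \<bullet> x)) *\<^sub>R b = (b \<bullet> x) *\<^sub>R (A *v b)"
        by (simp add: mult.commute)
    qed
    also have "\<dots> = A *v (\<Sum>b\<in>B. (b \<bullet> x) *\<^sub>R b)"
      by (simp add: mv_sum matrix_vector_mult_scaleR)
    also have "(\<Sum>b\<in>B. (b \<bullet> x) *\<^sub>R b) = x"
      using orth_expand[OF fB po n1, of x] sp by simp
    finally show "(S ** S) *v x = A *v x" .
  qed
  ultimately show ?thesis by blast
qed

lemma psd_zero:
  fixes B :: "real^'n^'n"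
  assumes pB: "psd B" and z: "v \<bullet> (B *v v) = 0"
  shows "B *v v = 0"
proof -
  have sB: "symmetric_mat B" using pB by (simp add: psd_def)
  define w where "w = B *v v"
  have "- 2 * (w \<bullet> w) = 0"
  proof (rule quad_zero)
    fix t :: real
    have "0 \<le> (v + t *\<^sub>R w) \<bullet> (B *v (v + t *\<^sub>R w))" using pB by (simp add: psd_def)
    also have "\<dots> = 2 * t * (w \<bullet> w) + t\<^sup>2 * (w \<bullet> (B *v w))"
      using qf_expand[OF sB, of v t w] z w_def by simp
    finally show "- 2 * (w \<bullet> w) * t + - (w \<bullet> (B *v w)) * t\<^sup>2 \<le> 0" by (simp add: algebra_simps)
  qed
  then show ?thesis by (simp add: w_def)
qed

lemma psd_sqrt_unique:
  fixes B C :: "real^'n^'n"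
  assumes pB: "psd B" and pC: "psd C" and eq: "B ** B = C ** C"
  shows "B = C"
proof -
  have sB: "symmetric_mat B" and sC: "symmetric_mat C" using pB pC by (auto simp: psd_def)
  define D where "D = B - C"
  have sD: "symmetric_mat D" using sB sC
    by (simp add: D_def symmetric_mat_def transpose_def vec_eq_iff)
  obtain E where fE: "finite E" and po: "pairwise orthogonal E" and n1: "\<And>b. b \<in> E \<Longrightarrow> norm b = 1"
    and ev: "\<And>b. b \<in> E \<Longrightarrow> D *v b = (b \<bullet> (D *v b)) *\<^sub>R b" and sp: "span E = UNIV"
    using spectral[OF sD] by blast
  have D0: "D *v b = 0" if bE: "b \<in> E" for b
  proof -
    define l where "l = b \<bullet> (D *v b)"
    have Db: "D *v b = l *\<^sub>R b" using ev[OF bE] l_def by simp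
    have key: "B *v (D *v y) + D *v (C *v y) = 0" for y
    proof -
      have "B *v (D *v y) + D *v (C *v y) = (B ** B) *v y - (C ** C) *v y"
        by (simp add: D_def algebra_simps matrix_vector_mul_assoc[symmetric])
      then show ?thesis using eq by simp
    qed
    have "0 = b \<bullet> (B *v (D *v b)) + b \<bullet> (D *v (C *v b))"
      using key[of b] by (simp add: inner_add_right[symmetric])
    also have "b \<bullet> (D *v (C *v b)) = (D *v b) \<bullet> (C *v b)" by (rule sym_inner[OF sD])
    finally have "0 = l * (b \<bullet> (B *v b) + b \<bullet> (C *v b))"
      by (simp add: Db matrix_vector_mult_scaleR algebra_simps)
    moreover have "b \<bullet> (B *v b) \<ge> 0" "b \<bullet> (C *v b) \<ge> 0" using pB pC by (auto simp: psd_def)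
    ultimately consider "l = 0" | "b \<bullet> (B *v b) = 0 \<and> b \<bullet> (C *v b) = 0" by force
    then show ?thesis
    proof cases
      case 1 then show ?thesis using Db by simp
    next
      case 2
      then have "B *v b = 0" "C *v b = 0" using psd_zero pB pC by blast+
      then show ?thesis by (simp add: D_def matrix_vector_mult_diff_rdistrib)
    qed
  qed
  have "D = 0"
  proof (rule iffD2[OF matrix_eq], intro allI)
    fix x
    have "D *v x = D *v (\<Sum>b\<in>E. (b \<bullet> x) *\<^sub>R b)"
      using orth_expand[OF fE po n1, of x] sp by simp
    also have "\<dots> = 0" by (simp add: mv_sum matrix_vector_mult_scaleR D0)
    finally show "D *v x = 0 *v x" by simp
  qed
  then show ?thesis by (simp add: D_def)
qed

lemma psd_sqrt_props:
  fixes A :: "real^'n^'n"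
  assumes "psd A"
  shows "psd (psd_sqrt A)" "psd_sqrt A ** psd_sqrt A = A"
proof -
  obtain S where S: "psd S" "S ** S = A" using psd_sqrt_exists[OF assms] by blast
  have "psd_sqrt A = S" unfolding psd_sqrt_def
    by (rule the_equality) (use S psd_sqrt_unique in auto)
  then show "psd (psd_sqrt A)" "psd_sqrt A ** psd_sqrt A = A" using S by auto
qed

lemma psd_sqrt_eq:
  fixes A S :: "real^'n^'n"
  assumes "psd S" "S ** S = A"
  shows "psd_sqrt A = S"
  unfolding psd_sqrt_def
  by (rule the_equality) (use assms psd_sqrt_unique in auto)



lemma norm_sq_rows:
  fixes A :: "'a::real_inner^'m"
  shows "(norm A)\<^sup>2 = (\<Sum>i\<in>UNIV. (norm (A$i))\<^sup>2)"
  by (simp add: power2_norm_eq_inner inner_vec_def)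

lemma frob_eq: "frob_norm (A::real^'n^'n) = norm A"
proof -
  have "(norm A)\<^sup>2 = (\<Sum>i\<in>UNIV. \<Sum>j\<in>UNIV. (A $ i $ j)\<^sup>2)"
    by (simp only: norm_sq_rows) (simp add: power2_norm_eq_inner inner_vec_def power2_eq_square)
  then show ?thesis unfolding frob_norm_def by (metis norm_ge_zero real_sqrt_abs abs_of_nonneg)
qed

lemma norm_sq_trace: "(norm (A::real^'n^'m))\<^sup>2 = trace (A ** transpose A)"
  by (simp only: norm_sq_rows) (simp add: power2_norm_eq_inner inner_vec_def trace_def
      matrix_matrix_mult_def transpose_def power2_eq_square)

lemma norm_transpose: "norm (transpose (A::real^'n^'n)) = norm A"
proof -
  have "(norm (transpose A))\<^sup>2 = trace (transpose A ** transpose (transpose A))"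
    by (rule norm_sq_trace)
  also have "\<dots> = trace (transpose A ** A)" by simp
  also have "\<dots> = trace (A ** transpose A)" by (rule trace_mul_sym)
  also have "\<dots> = (norm A)\<^sup>2" by (rule norm_sq_trace[symmetric])
  finally have "(norm (transpose A))\<^sup>2 = (norm A)\<^sup>2" .
  then show ?thesis by (simp add: power2_eq_iff_nonneg)
qed

lemma norm_mv: "norm ((M::real^'n^'m) *v z) \<le> norm M * norm z"
proof -
  have "(norm (M *v z))\<^sup>2 = (\<Sum>i\<in>UNIV. ((M$i) \<bullet> z)\<^sup>2)"
    by (simp add: norm_sq_rows matrix_vector_mul_component)
  also have "\<dots> \<le> (\<Sum>i\<in>UNIV. (norm (M$i))\<^sup>2 * (norm z)\<^sup>2)"
  proof (rule sum_mono)
    fix i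
    have "\<bar>(M$i) \<bullet> z\<bar> \<le> norm (M$i) * norm z" by (rule Cauchy_Schwarz_ineq2)
    then have "\<bar>(M$i) \<bullet> z\<bar>\<^sup>2 \<le> (norm (M$i) * norm z)\<^sup>2"
      by (intro power_mono) auto
    then show "((M$i) \<bullet> z)\<^sup>2 \<le> (norm (M$i))\<^sup>2 * (norm z)\<^sup>2" by (simp add: power_mult_distrib)
  qed
  also have "\<dots> = ((norm M) * norm z)\<^sup>2"
    by (simp add: norm_sq_rows power_mult_distrib sum_distrib_right)
  finally show ?thesis by (rule power2_le_imp_le) simp
qed

lemma row_mm: "((A::real^_^_) ** B) $ i = transpose B *v (A $ i)"
  by (auto simp: vec_eq_iff matrix_matrix_mult_def matrix_vector_mult_def transpose_def intro!: sum.cong simp: mult.commute)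

lemma norm_mm_K:
  fixes A B :: "real^'n^'n"
  assumes K: "K \<ge> 0" and bd: "\<And>z. norm (transpose B *v z) \<le> K * norm z"
  shows "norm (A ** B) \<le> norm A * K"
proof -
  have "(norm (A ** B))\<^sup>2 = (\<Sum>i\<in>UNIV. (norm (transpose B *v (A$i)))\<^sup>2)"
    by (simp add: norm_sq_rows row_mm)
  also have "\<dots> \<le> (\<Sum>i\<in>UNIV. K\<^sup>2 * (norm (A$i))\<^sup>2)"
  proof (rule sum_mono)
    fix i
    have "(norm (transpose B *v (A$i)))\<^sup>2 \<le> (K * norm (A$i))\<^sup>2"
      by (intro power_mono bd) auto
    then show "(norm (transpose B *v (A$i)))\<^sup>2 \<le> K\<^sup>2 * (norm (A$i))\<^sup>2" by (simp add: power_mult_distrib)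
  qed
  also have "\<dots> = (norm A * K)\<^sup>2"
    by (simp add: norm_sq_rows power_mult_distrib sum_distrib_left mult.commute)
  finally show ?thesis by (rule power2_le_imp_le) (use K in simp)
qed

lemma norm_mm: "norm ((A::real^'n^'n) ** (B::real^'n^'n)) \<le> norm A * norm B"
proof (rule norm_mm_K)
  fix z show "norm (transpose B *v z) \<le> norm B * norm z" by (metis norm_mv norm_transpose)
qed simp



lemma trace_proj:
  fixes Pi :: "real^'n^'n"
  assumes sP: "symmetric_mat Pi" and idem: "Pi ** Pi = Pi"
  shows "trace Pi = real (rank Pi)"
proof -
  define R where "R = range (\<lambda>x. Pi *v x)"
  have sR: "subspace R" unfolding R_def
    by (rule linear_subspace_image[OF matrix_vector_mul_linear subspace_UNIV])
  obtain U where UR: "U \<subseteq> R" and po: "pairwise orthogonal U" and n1: "\<And>x. x \<in> U \<Longrightarrow> norm x = 1"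
    and iU: "independent U" and cU: "card U = dim R" and sU: "span U = R"
    using orthonormal_basis_subspace[OF sR] by blast
  have fU: "finite U" using iU independent_imp_finite by blast
  have rk: "rank Pi = card U" using cU rank_dim_range R_def by simp
  have fixu: "Pi *v u = u" if uU: "u \<in> U" for u
  proof -
    obtain y where "u = Pi *v y" using UR uU R_def by blast
    then show ?thesis using idem by (simp add: matrix_vector_mul_assoc)
  qed
  have exp: "Pi *v x = (\<Sum>u\<in>U. (u \<bullet> x) *\<^sub>R u)" for x
  proof -
    have "Pi *v x \<in> span U" using sU R_def by auto
    then have "Pi *v x = (\<Sum>u\<in>U. (u \<bullet> (Pi *v x)) *\<^sub>R u)" using orth_expand[OF fU po n1] by blast
    also have "\<dots> = (\<Sum>u\<in>U. (u \<bullet> x) *\<^sub>R u)"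
    proof (intro sum.cong refl)
      fix u assume "u \<in> U"
      have "u \<bullet> (Pi *v x) = (Pi *v u) \<bullet> x" by (rule sym_inner[OF sP])
      then show "(u \<bullet> (Pi *v x)) *\<^sub>R u = (u \<bullet> x) *\<^sub>R u" using fixu[OF \<open>u \<in> U\<close>] by simp
    qed
    finally show ?thesis .
  qed
  have "trace Pi = (\<Sum>i\<in>UNIV. (Pi *v axis i 1) $ i)"
    by (simp add: trace_def matrix_vector_mult_basis column_def)
  also have "\<dots> = (\<Sum>i\<in>UNIV. \<Sum>u\<in>U. u$i * u$i)"
    by (simp add: exp sum_component inner_axis)
  also have "\<dots> = (\<Sum>u\<in>U. \<Sum>i\<in>UNIV. u$i * u$i)" by (rule sum.swap)
  also have "\<dots> = (\<Sum>u\<in>U. 1)"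
  proof (intro sum.cong refl)
    fix u assume "u \<in> U"
    have "(\<Sum>i\<in>UNIV. u$i * u$i) = u \<bullet> u" by (simp add: inner_vec_def)
    also have "\<dots> = 1" using n1[OF \<open>u \<in> U\<close>] by (simp add: dot_square_norm)
    finally show "(\<Sum>i\<in>UNIV. u$i * u$i) = 1" .
  qed
  finally show ?thesis using rk by simp
qed



lemma scaleR_mv: "((k::real) *\<^sub>R (A::real^'n^'m)) *v x = k *\<^sub>R (A *v x)"
  by (simp add: vec_eq_iff matrix_vector_mult_def sum_distrib_left mult.assoc)

lemma neg_mv: "(- (A::real^'n^'m)) *v x = - (A *v x)"
  by (simp add: vec_eq_iff matrix_vector_mult_def sum_negf)

lemma sym_entry: "symmetric_mat A \<Longrightarrow> A $ i $ j = A $ j $ i"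
  unfolding symmetric_mat_def transpose_def by (metis vec_lambda_beta)

lemma sym_add: "symmetric_mat A \<Longrightarrow> symmetric_mat B \<Longrightarrow> symmetric_mat (A + B)"
  by (simp add: symmetric_mat_def transpose_def vec_eq_iff)
lemma sym_diff: "symmetric_mat (A::real^'n^'n) \<Longrightarrow> symmetric_mat B \<Longrightarrow> symmetric_mat (A - B)"
  by (simp add: symmetric_mat_def transpose_def vec_eq_iff)
lemma sym_scale: "symmetric_mat (A::real^'n^'n) \<Longrightarrow> symmetric_mat (k *\<^sub>R A)"
  by (simp add: symmetric_mat_def transpose_scalar)
lemma sym_id: "symmetric_mat (mat k :: real^'n^'n)"
  by (simp add: symmetric_mat_def)

lemma matrix_inv_eq:
  fixes A B :: "real^'n^'n"
  assumes "A ** B = mat 1" "B ** A = mat 1"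
  shows "matrix_inv A = B"
proof -
  have "\<exists>X. A ** X = mat 1 \<and> X ** A = mat 1" using assms by blast
  then have X: "A ** matrix_inv A = mat 1 \<and> matrix_inv A ** A = mat 1"
    unfolding matrix_inv_def by (rule someI_ex)
  have "matrix_inv A = (B ** A) ** matrix_inv A" using assms by simp
  also have "\<dots> = B" using X by (simp flip: matrix_mul_assoc)
  finally show ?thesis .
qed

lemma proj_quad:
  fixes Ps :: "real^'n^'n"
  assumes "symmetric_mat Ps" "Ps ** Ps = Ps"
  shows "x \<bullet> (Ps *v x) = (Ps *v x) \<bullet> (Ps *v x)"
proof -
  have "x \<bullet> (Ps *v x) = x \<bullet> (Ps *v (Ps *v x))" using assms by (simp add: matrix_vector_mul_assoc)
  also have "\<dots> = (Ps *v x) \<bullet> (Ps *v x)" by (rule sym_inner[OF assms(1)])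
  finally show ?thesis .
qed

lemma norm_psd_factor:
  fixes R X :: "real^'n^'n"
  assumes "symmetric_mat R" "symmetric_mat X"
  shows "(norm (X ** R))\<^sup>2 = trace ((R ** R) ** (X ** X))"
proof -
  have "(norm (X ** R))\<^sup>2 = trace ((X ** R) ** transpose (X ** R))" by (rule norm_sq_trace)
  also have "transpose (X ** R) = R ** X" using assms by (simp add: matrix_transpose_mul symmetric_mat_def)
  also have "trace ((X ** R) ** (R ** X)) = trace (X ** ((R ** R) ** X))" by (simp add: matrix_mul_assoc)
  also have "\<dots> = trace (((R ** R) ** X) ** X)" by (rule trace_mul_sym)
  finally show ?thesis by (simp add: matrix_mul_assoc)
qed

lemma scal_bounds:
  fixes c s k \<rho> :: real
  assumes r0: "0 < \<rho>" and r1: "\<rho> \<le> 1" and c_def: "c = 1 / \<rho>\<^sup>2" and c0: "c > 0" and ss: "s * s = 1 + c"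
   and ks: "k * s = 1" and k0: "k > 0"
  shows "k \<le> \<rho>" "c * k \<le> 1 / \<rho>" "c * k * k \<le> c"
proof -
  have "k * k * (1 + c) = (k * s) * (k * s)" unfolding ss[symmetric] by (simp add: algebra_simps)
  then have kk: "k * k * (1 + c) = 1" using ks by simp
  have rr: "\<rho> * \<rho> * (1 + c) = \<rho> * \<rho> + 1" using r0 unfolding c_def by (simp add: field_simps power2_eq_square)
  have "k * k \<le> \<rho> * \<rho>"
  proof (rule ccontr)
    assume "\<not> k * k \<le> \<rho> * \<rho>"
    then have "\<rho> * \<rho> * (1 + c) < k * k * (1 + c)" using c0 by (intro mult_strict_right_mono) auto
    then have "\<rho> * \<rho> + 1 < 1" using kk rr by linarith
    then show False by simp
  qed
  then show kr: "k \<le> \<rho>"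
  proof -
    have False if "k > \<rho>" using mult_strict_mono[OF that that] r0 k0 \<open>k * k \<le> \<rho> * \<rho>\<close> by linarith
    then show ?thesis by fastforce
  qed
  show "c * k \<le> 1 / \<rho>"
  proof -
    have "c * k \<le> c * \<rho>" using kr c0 by simp
    also have "c * \<rho> = 1 / \<rho>" using r0 unfolding c_def by (simp add: power2_eq_square)
    finally show ?thesis .
  qed
  have "k * k \<le> 1"
  proof (rule ccontr)
    assume "\<not> k * k \<le> 1"
    then have "1 * (1 + c) < k * k * (1 + c)" using c0 by (intro mult_strict_right_mono) auto
    then have "1 + c < 1" using kk by simp
    then show False using c0 by linarith
  qed
  then have "c * (k * k) \<le> c * 1" using c0 by (intro mult_left_mono) auto
  then show "c * k * k \<le> c" by (simp add: mult.assoc)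
qed


theorem lemma4:
  fixes Pstar P :: "real^'n^'n" and m :: nat and \<delta> \<rho> :: real
  assumes "orth_projector Pstar m"
    and "\<delta> \<ge> 0" and "0 < \<rho>" and "\<rho> \<le> 1"
    and "P \<in> Pset \<delta> m Pstar"
  shows "let S = psd_sqrt (mat 1 + (1 / \<rho>\<^sup>2) *\<^sub>R P);
             Pr = matrix_inv (psd_sqrt (mat 1 + (1 / \<rho>\<^sup>2) *\<^sub>R Pstar));
             U = Pr ** (S ** S) ** Pr;
             Ustar = mat 1
         in frob_norm (U - Ustar) \<le> 2 * \<delta>\<^sup>2 / \<rho>\<^sup>2 + 2 * \<delta> / \<rho>"
proof -
  define Ps where "Ps = Pstar"
  have sPs: "symmetric_mat Ps" and idem: "Ps ** Ps = Ps" and rk: "rank Ps = m"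
    using assms(1) by (auto simp: orth_projector_def Ps_def)
  have trPs: "trace Ps = real m" using trace_proj[OF sPs idem] rk by simp
  have sP: "symmetric_mat P" and trP: "trace P \<le> real m" and pP: "psd P" and pIP: "psd (mat 1 - P)"
    and trd: "trace ((mat 1 - P) ** Ps) \<le> \<delta>\<^sup>2"
    using assms(5) by (auto simp: Pset_def loewner_le_def Ps_def)
  define c where "c = 1 / \<rho>\<^sup>2"
  define s where "s = sqrt (1 + c)"
  define k where "k = 1 / s"
  have c0: "c > 0" using assms(3) by (simp add: c_def)
  have s1: "s \<ge> 1" using c0 by (simp add: s_def)
  have ss: "s * s = 1 + c" using c0 by (simp add: s_def)
  have ks: "k * s = 1" using s1 by (simp add: k_def)
  have k0: "k > 0" using s1 by (simp add: k_def)
  have PPx: "Ps *v (Ps *v x) = Ps *v x" for x using idem by (simp add: matrix_vector_mul_assoc)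
  define Q where "Q = mat 1 - Ps"
  define Sst where "Sst = mat 1 + (s - 1) *\<^sub>R Ps"
  define T where "T = mat 1 + (k - 1) *\<^sub>R Ps"
  have psdSst: "psd Sst"
    unfolding psd_def
  proof (intro conjI allI)
    show "symmetric_mat Sst" unfolding Sst_def by (intro sym_add sym_id sym_scale sPs)
    fix x
    have "x \<bullet> (Sst *v x) = x \<bullet> x + (s - 1) * ((Ps *v x) \<bullet> (Ps *v x))"
      by (simp add: Sst_def algebra_simps scaleR_mv proj_quad[OF sPs idem])
    also have "\<dots> \<ge> 0" using s1 by (intro add_nonneg_nonneg mult_nonneg_nonneg) auto
    finally show "0 \<le> x \<bullet> (Sst *v x)" .
  qed
  have SstSq: "Sst ** Sst = mat 1 + c *\<^sub>R Ps"
  proof (rule iffD2[OF matrix_eq], intro allI)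
    fix x
    have "(Sst ** Sst) *v x = x + ((s - 1) + (s - 1) + (s - 1) * (s - 1)) *\<^sub>R (Ps *v x)"
      by (simp add: Sst_def algebra_simps scaleR_mv PPx flip: matrix_vector_mul_assoc)
    also have "(s - 1) + (s - 1) + (s - 1) * (s - 1) = c" using ss by (simp add: algebra_simps)
    finally show "(Sst ** Sst) *v x = (mat 1 + c *\<^sub>R Ps) *v x"
      by (simp add: algebra_simps scaleR_mv)
  qed
  have sqrtPs: "psd_sqrt (mat 1 + (1 / \<rho>\<^sup>2) *\<^sub>R Pstar) = Sst"
    using psd_sqrt_eq[OF psdSst SstSq] by (simp add: c_def Ps_def)
  have ST: "Sst ** T = mat 1"
  proof (rule iffD2[OF matrix_eq], intro allI)
    fix x
    have "(Sst ** T) *v x = x + ((s - 1) + (k - 1) + (s - 1) * (k - 1)) *\<^sub>R (Ps *v x)"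
      by (simp add: Sst_def T_def algebra_simps scaleR_mv PPx flip: matrix_vector_mul_assoc)
    also have "(s - 1) + (k - 1) + (s - 1) * (k - 1) = 0" using ks by (simp add: algebra_simps)
    finally show "(Sst ** T) *v x = mat 1 *v x" by simp
  qed
  have TS: "T ** Sst = mat 1"
  proof (rule iffD2[OF matrix_eq], intro allI)
    fix x
    have "(T ** Sst) *v x = x + ((s - 1) + (k - 1) + (s - 1) * (k - 1)) *\<^sub>R (Ps *v x)"
      by (simp add: Sst_def T_def algebra_simps scaleR_mv PPx flip: matrix_vector_mul_assoc)
    also have "(s - 1) + (k - 1) + (s - 1) * (k - 1) = 0" using ks by (simp add: algebra_simps)
    finally show "(T ** Sst) *v x = mat 1 *v x" by simp
  qed
  have Pr: "matrix_inv (psd_sqrt (mat 1 + (1 / \<rho>\<^sup>2) *\<^sub>R Pstar)) = T"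
    using sqrtPs matrix_inv_eq[OF ST TS] by simp
  define M where "M = mat 1 + c *\<^sub>R P"
  have psdM: "psd M"
    unfolding psd_def
  proof (intro conjI allI)
    show "symmetric_mat M" unfolding M_def by (intro sym_add sym_id sym_scale sP)
    fix x
    have "x \<bullet> (M *v x) = x \<bullet> x + c * (x \<bullet> (P *v x))"
      by (simp add: M_def algebra_simps scaleR_mv)
    also have "\<dots> \<ge> 0" using c0 pP by (intro add_nonneg_nonneg mult_nonneg_nonneg) (auto simp: psd_def)
    finally show "0 \<le> x \<bullet> (M *v x)" .
  qed
  have SS: "psd_sqrt (mat 1 + (1 / \<rho>\<^sup>2) *\<^sub>R P) ** psd_sqrt (mat 1 + (1 / \<rho>\<^sup>2) *\<^sub>R P) = M"
    using psd_sqrt_props(2)[OF psdM] by (simp add: M_def c_def)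
  define U where "U = T ** M ** T"
  have Qx: "Q *v x = x - Ps *v x" for x by (simp add: Q_def algebra_simps)
  have Tx: "T *v x = x + (k - 1) *\<^sub>R (Ps *v x)" for x by (simp add: T_def algebra_simps scaleR_mv)
  have Mx: "M *v x = x + c *\<^sub>R (P *v x)" for x by (simp add: M_def algebra_simps scaleR_mv)
  have sQ: "symmetric_mat Q" unfolding Q_def by (intro sym_diff sym_id sPs)
  have QQ: "Q ** Q = Q"
    by (rule iffD2[OF matrix_eq], intro allI) (simp add: Qx PPx algebra_simps flip: matrix_vector_mul_assoc)
  have E1: "U - mat 1 = c *\<^sub>R (Q ** P ** Q) + (c * k) *\<^sub>R (Q ** P ** Ps) + (c * k) *\<^sub>R (Ps ** P ** Q)
      + ((k * k - 1) *\<^sub>R Ps + (c * k * k) *\<^sub>R (Ps ** P ** Ps))"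
    by (rule iffD2[OF matrix_eq], intro allI)
      (simp add: U_def Qx Tx Mx PPx scaleR_mv algebra_simps flip: matrix_vector_mul_assoc)
  have eqk: "k * k - 1 = - (c * k * k)"
  proof -
    have "k * k * (1 + c) = 1" using ks ss by (metis mult.assoc mult.commute mult_1)
    then show ?thesis by (simp add: algebra_simps)
  qed
  have E2: "(k * k - 1) *\<^sub>R Ps + (c * k * k) *\<^sub>R (Ps ** P ** Ps) = - ((c * k * k) *\<^sub>R (Ps ** (mat 1 - P) ** Ps))"
  proof -
    have "Ps ** (mat 1 - P) ** Ps = Ps - Ps ** P ** Ps"
      by (rule iffD2[OF matrix_eq], intro allI)
        (simp add: PPx algebra_simps flip: matrix_vector_mul_assoc)
    then show ?thesis unfolding eqk by (simp only:) (simp add: scaleR_diff_right)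
  qed
  define A1 where "A1 = Q ** P ** Q"
  define A2 where "A2 = Q ** P ** Ps"
  define A3 where "A3 = Ps ** P ** Q"
  define A4 where "A4 = Ps ** (mat 1 - P) ** Ps"
  have E: "U - mat 1 = c *\<^sub>R A1 + (c * k) *\<^sub>R A2 + (c * k) *\<^sub>R A3 - (c * k * k) *\<^sub>R A4"
    using E1 E2 by (simp add: A1_def A2_def A3_def A4_def)
  have tri: "norm (U - mat 1) \<le> c * norm A1 + (c * k) * norm A2 + (c * k) * norm A3 + (c * k * k) * norm A4"
  proof -
    have "norm (U - mat 1) \<le> norm (c *\<^sub>R A1) + norm ((c * k) *\<^sub>R A2) + norm ((c * k) *\<^sub>R A3) + norm ((c * k * k) *\<^sub>R A4)"
      unfolding E by (smt (verit) norm_triangle_ineq norm_triangle_ineq4)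
    also have "\<dots> = c * norm A1 + (c * k) * norm A2 + (c * k) * norm A3 + (c * k * k) * norm A4"
      using c0 k0 by simp
    finally show ?thesis .
  qed
  obtain R1 where pR1: "psd R1" and R1: "R1 ** R1 = P" using psd_sqrt_exists[OF pP] by blast
  obtain R2 where pR2: "psd R2" and R2: "R2 ** R2 = mat 1 - P" using psd_sqrt_exists[OF pIP] by blast
  have sR1: "symmetric_mat R1" and sR2: "symmetric_mat R2" using pR1 pR2 by (auto simp: psd_def)
  have trPQ: "trace (P ** Q) = trace P - trace (P ** Ps)"
  proof -
    have "P ** Q = P - P ** Ps"
      by (rule iffD2[OF matrix_eq], intro allI) (simp add: Qx algebra_simps flip: matrix_vector_mul_assoc)
    then show ?thesis by (simp add: trace_sub)
  qed
  have trIPPs: "trace ((mat 1 - P) ** Ps) = trace Ps - trace (P ** Ps)"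
  proof -
    have "(mat 1 - P) ** Ps = Ps - P ** Ps"
      by (rule iffD2[OF matrix_eq], intro allI) (simp add: algebra_simps flip: matrix_vector_mul_assoc)
    then show ?thesis by (simp add: trace_sub)
  qed
  have t1: "trace (P ** Q) \<le> \<delta>\<^sup>2" using trPQ trIPPs trd trP trPs by linarith
  have nQR1: "(norm (Q ** R1))\<^sup>2 = trace (P ** Q)"
    using norm_psd_factor[OF sR1 sQ] unfolding R1 QQ .
  have nPsR2: "(norm (Ps ** R2))\<^sup>2 = trace ((mat 1 - P) ** Ps)"
    using norm_psd_factor[OF sR2 sPs] unfolding R2 idem .
  have nPsR2d: "norm (Ps ** R2) \<le> \<delta>"
  proof -
    have "(norm (Ps ** R2))\<^sup>2 \<le> \<delta>\<^sup>2" using nPsR2 trd by simp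
    then show ?thesis by (rule power2_le_imp_le) (use assms(2) in simp)
  qed
  have b1: "norm A1 \<le> \<delta>\<^sup>2"
  proof -
    have "A1 = (Q ** R1) ** (R1 ** Q)" unfolding A1_def by (metis R1 matrix_mul_assoc)
    moreover have "R1 ** Q = transpose (Q ** R1)" using sR1 sQ by (simp add: matrix_transpose_mul symmetric_mat_def)
    ultimately have "norm A1 \<le> norm (Q ** R1) * norm (Q ** R1)" using norm_mm norm_transpose by metis
    also have "\<dots> = trace (P ** Q)" using nQR1 by (simp add: power2_eq_square)
    finally show ?thesis using t1 by simp
  qed
  have opQ: "norm (Q *v y) \<le> norm y" for y
  proof -
    have "(norm (Q *v y))\<^sup>2 = y \<bullet> (Q *v y)" using proj_quad[OF sQ QQ, of y] by (simp add: dot_square_norm)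
    also have "\<dots> = y \<bullet> y - (Ps *v y) \<bullet> (Ps *v y)" using proj_quad[OF sPs idem, of y] by (simp add: Qx inner_diff_right)
    also have "\<dots> \<le> (norm y)\<^sup>2" by (simp add: dot_square_norm)
    finally show ?thesis by (rule power2_le_imp_le) simp
  qed
  have opR2: "norm (R2 *v z) \<le> norm z" for z
  proof -
    have "(norm (R2 *v z))\<^sup>2 = z \<bullet> (R2 *v (R2 *v z))" using sym_inner[OF sR2, of z "R2 *v z"] by (simp add: dot_square_norm)
    also have "\<dots> = z \<bullet> z - z \<bullet> (P *v z)" 
    proof -
      have "R2 *v (R2 *v z) = z - P *v z"
        by (metis R2 matrix_vector_mul_assoc matrix_vector_mult_diff_rdistrib matrix_vector_mul_lid)
      then show ?thesis by (simp add: inner_diff_right)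
    qed
    also have "\<dots> \<le> (norm z)\<^sup>2" using pP by (simp add: dot_square_norm psd_def)
    finally show ?thesis by (rule power2_le_imp_le) simp
  qed
  have b3: "norm A3 \<le> \<delta>"
  proof -
    have "(Ps ** R2) ** (R2 ** Q) = Ps ** (mat 1 - P) ** Q" by (metis R2 matrix_mul_assoc)
    also have "\<dots> = - A3" unfolding A3_def
      by (rule iffD2[OF matrix_eq], intro allI) (simp add: Qx PPx neg_mv algebra_simps flip: matrix_vector_mul_assoc)
    finally have "(Ps ** R2) ** (R2 ** Q) = - A3" .
    then have "norm A3 = norm ((Ps ** R2) ** (R2 ** Q))" by simp
    also have "\<dots> \<le> norm (Ps ** R2) * 1"
    proof (rule norm_mm_K)
      fix z
      have "transpose (R2 ** Q) = Q ** R2" using sR2 sQ by (simp add: matrix_transpose_mul symmetric_mat_def)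
      then show "norm (transpose (R2 ** Q) *v z) \<le> 1 * norm z"
        using opQ opR2 order_trans by (simp flip: matrix_vector_mul_assoc) blast
    qed simp
    finally show ?thesis using nPsR2d by simp
  qed
  have b2: "norm A2 \<le> \<delta>"
  proof -
    have "A2 = transpose A3" unfolding A2_def A3_def using sP sQ sPs
      by (simp add: matrix_transpose_mul symmetric_mat_def matrix_mul_assoc)
    then show ?thesis using b3 norm_transpose by metis
  qed
  have b4: "norm A4 \<le> \<delta>\<^sup>2"
  proof -
    have "A4 = (Ps ** R2) ** (R2 ** Ps)" unfolding A4_def by (metis R2 matrix_mul_assoc)
    moreover have "R2 ** Ps = transpose (Ps ** R2)" using sR2 sPs by (simp add: matrix_transpose_mul symmetric_mat_def)
    ultimately have "norm A4 \<le> norm (Ps ** R2) * norm (Ps ** R2)" using norm_mm norm_transpose by metis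
    also have "\<dots> \<le> \<delta> * \<delta>" using nPsR2d assms(2) by (intro mult_mono) auto
    finally show ?thesis by (simp add: power2_eq_square)
  qed
  have kr: "k \<le> \<rho>" and ck: "c * k \<le> 1 / \<rho>" and ckk: "c * k * k \<le> c"
    using scal_bounds[OF assms(3,4) c_def c0 ss ks k0] by auto
  have dnn: "norm A2 \<ge> 0" "norm A4 \<ge> 0" by auto
  have main: "norm (U - mat 1) \<le> 2 * \<delta>\<^sup>2 / \<rho>\<^sup>2 + 2 * \<delta> / \<rho>"
  proof -
    have "c * norm A1 \<le> c * \<delta>\<^sup>2" using b1 c0 by simp
    moreover have "(c * k) * norm A2 \<le> \<delta> / \<rho>"
      using mult_mono[OF ck b2] c0 k0 assms(3) by simp
    moreover have "(c * k) * norm A3 \<le> \<delta> / \<rho>"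
      using mult_mono[OF ck b3] c0 k0 assms(3) by simp
    moreover have "(c * k * k) * norm A4 \<le> c * \<delta>\<^sup>2"
      using mult_mono[OF ckk b4] c0 by simp
    moreover have "2 * \<delta>\<^sup>2 / \<rho>\<^sup>2 + 2 * \<delta> / \<rho> = 2 * (c * \<delta>\<^sup>2) + 2 * (\<delta> / \<rho>)"
      by (simp add: c_def)
    ultimately show ?thesis using tri by linarith
  qed
  then have main: "frob_norm (U - mat 1) \<le> 2 * \<delta>\<^sup>2 / \<rho>\<^sup>2 + 2 * \<delta> / \<rho>"
    by (simp add: frob_eq)
  show ?thesis unfolding Let_def Pr SS using main U_def by simp
qed


end
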